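(* Let $V$ and $W$ be subsets of normed spaces over $\mathbb{R}$ or $\mathbb{C}$ with $V$ compact, and let $T:V\to W$ be continuous. (1) There exists a pseudo-inverse $S:W\to V$ of $T$. (2) If moreover $W$ is a Hilbert space, $T$ is injective and $T(V)$ is convex, then $S:=T^{-1}\circ P_{T(V)}:W\to V$, where $P_{T(V)}$ is the metric projection onto $T(V)$ and $T^{-1}:T(V)\to V$ is the inverse of $T$ on its image, is continuous and is the unique pseudo-inverse of $T$ defined on $W$.
   Context: Let $V,W$ be subsets of normed spaces over $\mathbb{R}$ or $\mathbb{C}$ and $T:V\to W$. An operator $S:W\to V$ is a pseudo-inverse of $T$ if: (BAS) for every $w\in W$, the minimum $m_w=\min_{v\in V}\|T(v)-w\|$ is attained, the norm attains its minimum on $\{v\in V:\|T(v)-w\|=m_w\}$, and $S(w)\in\arg\min\{\|v\|:v\in V,\ \|T(v)-w\|=m_w\}$; and (MP2) $S\circ T\circ S=S$. The metric projection onto a nonempty closed convex subset of a Hilbert space maps each point to its unique nearest point in the set. *)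

theory Defs
  imports "HOL-Analysis.Analysis"
begin

definition pseudo_inverse ::
  "'a::real_normed_vector set \<Rightarrow> 'b::real_normed_vector set \<Rightarrow> ('a \<Rightarrow> 'b) \<Rightarrow> ('b \<Rightarrow> 'a) \<Rightarrow> bool"
where
  "pseudo_inverse V W T S \<longleftrightarrow>
     (\<forall>w\<in>W.
        (\<exists>v0\<in>V. \<forall>v\<in>V. norm (T v0 - w) \<le> norm (T v - w)) \<and>
        (let m = Inf ((\<lambda>v. norm (T v - w)) ` V);
             M = {v\<in>V. norm (T v - w) = m}
         in (\<exists>u\<in>M. \<forall>v\<in>M. norm u \<le> norm v) \<and>
            S w \<in> M \<and> (\<forall>v\<in>M. norm (S w) \<le> norm v))) \<and>
     (\<forall>w\<in>W. S (T (S w)) = S w)"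

definition metric_projection :: "'b::real_normed_vector set \<Rightarrow> 'b \<Rightarrow> 'b" where
  "metric_projection C w = (THE p. p \<in> C \<and> (\<forall>y\<in>C. norm (w - p) \<le> norm (w - y)))"

end

theory Submission
  imports Defs
begin

definition Mset :: "'a::real_normed_vector set \<Rightarrow> ('a \<Rightarrow> 'b::real_normed_vector) \<Rightarrow> 'b \<Rightarrow> 'a set" where
  "Mset V T w = {v\<in>V. \<forall>u\<in>V. norm (T v - w) \<le> norm (T u - w)}"

lemma cont_dist:
  assumes "continuous_on V T"
  shows "continuous_on V (\<lambda>v. norm (T v - w))"
  by (intro continuous_intros assms)

lemma Mset_eq:
  assumes "compact V" "V \<noteq> {}" "continuous_on V T"
  shows "{v\<in>V. norm (T v - w) = Inf ((\<lambda>v. norm (T v - w)) ` V)} = Mset V T w"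
    and "\<exists>v0\<in>V. \<forall>v\<in>V. norm (T v0 - w) \<le> norm (T v - w)"
proof -
  obtain v0 where v0: "v0 \<in> V" "\<forall>v\<in>V. norm (T v0 - w) \<le> norm (T v - w)"
    using continuous_attains_inf[OF assms(1,2) cont_dist[OF assms(3)]] by blast
  then show "\<exists>v0\<in>V. \<forall>v\<in>V. norm (T v0 - w) \<le> norm (T v - w)" by blast
  have I: "Inf ((\<lambda>v. norm (T v - w)) ` V) = norm (T v0 - w)"
    by (rule cInf_eq_minimum) (use v0 in auto)
  show "{v\<in>V. norm (T v - w) = Inf ((\<lambda>v. norm (T v - w)) ` V)} = Mset V T w"
    unfolding I Mset_def using v0 by (auto intro: antisym)
qed

lemma Mset_compact:
  assumes "compact V" "V \<noteq> {}" "continuous_on V T"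
  shows "compact (Mset V T w)" "Mset V T w \<noteq> {}"
proof -
  obtain v0 where v0: "v0 \<in> V" "\<forall>v\<in>V. norm (T v0 - w) \<le> norm (T v - w)"
    using continuous_attains_inf[OF assms(1,2) cont_dist[OF assms(3)]] by blast
  have eq: "Mset V T w = {v\<in>V. norm (T v - w) = norm (T v0 - w)}"
    unfolding Mset_def using v0 by (auto intro: antisym)
  have "closed {v\<in>V. norm (T v - w) = norm (T v0 - w)}"
    by (rule continuous_closed_preimage_constant[OF cont_dist[OF assms(3)] compact_imp_closed[OF assms(1)]])
  from compact_Int_closed[OF assms(1) this] show "compact (Mset V T w)" unfolding eq
    by (simp add: Int_absorb1 subset_eq)
  show "Mset V T w \<noteq> {}" using eq v0 by auto
qed

lemma minnorm_exists:
  fixes K :: "'a::real_normed_vector set"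
  assumes "compact K" "K \<noteq> {}"
  shows "\<exists>u\<in>K. \<forall>v\<in>K. norm u \<le> norm v"
  using continuous_attains_inf[OF assms continuous_on_norm[OF continuous_on_id]] by simp

lemma part1:
  fixes V :: "'a::real_normed_vector set" and W :: "'b::real_normed_vector set"
    and T :: "'a \<Rightarrow> 'b"
  assumes "compact V" "V \<noteq> {}" "continuous_on V T"
  shows "\<exists>S. pseudo_inverse V W T S"
proof -
  define s where "s y = (SOME u. u \<in> V \<and> T u = y \<and> (\<forall>v\<in>V. T v = y \<longrightarrow> norm u \<le> norm v))" for y
  have s: "s y \<in> V \<and> T (s y) = y \<and> (\<forall>v\<in>V. T v = y \<longrightarrow> norm (s y) \<le> norm v)" if "y \<in> T ` V" for y
  proof -
    have cl: "closed {v\<in>V. T v = y}"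
      by (rule continuous_closed_preimage_constant[OF assms(3) compact_imp_closed[OF assms(1)]])
    have "compact {v\<in>V. T v = y}"
      using compact_Int_closed[OF assms(1) cl] by (simp add: Int_absorb1 subset_eq)
    moreover have "{v\<in>V. T v = y} \<noteq> {}" using that by auto
    ultimately obtain u where "u \<in> {v\<in>V. T v = y}" "\<forall>v\<in>{v\<in>V. T v = y}. norm u \<le> norm v"
      using minnorm_exists by blast
    then have "\<exists>u. u \<in> V \<and> T u = y \<and> (\<forall>v\<in>V. T v = y \<longrightarrow> norm u \<le> norm v)" by auto
    then show ?thesis unfolding s_def by (rule someI_ex)
  qed
  define mn where "mn w = (SOME u. u \<in> Mset V T w \<and> (\<forall>v\<in>Mset V T w. norm u \<le> norm v))" for w
  have mn: "mn w \<in> Mset V T w \<and> (\<forall>v\<in>Mset V T w. norm (mn w) \<le> norm v)" for w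
  proof -
    have "\<exists>u. u \<in> Mset V T w \<and> (\<forall>v\<in>Mset V T w. norm u \<le> norm v)"
      using minnorm_exists[OF Mset_compact[OF assms, of w]] by blast
    then show ?thesis unfolding mn_def by (rule someI_ex)
  qed
  define S where "S w = s (T (mn w))" for w
  have key: "S w \<in> Mset V T w \<and> (\<forall>v\<in>Mset V T w. norm (S w) \<le> norm v)" for w
  proof -
    have u0: "mn w \<in> V" using mn[of w] unfolding Mset_def by auto
    have sy: "s (T (mn w)) \<in> V \<and> T (s (T (mn w))) = T (mn w) \<and> norm (s (T (mn w))) \<le> norm (mn w)"
      using s[of "T (mn w)"] u0 by auto
    have "S w \<in> Mset V T w" using sy mn[of w] unfolding S_def Mset_def by auto
    then show ?thesis using sy mn[of w] unfolding S_def by force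
  qed
  have mp2: "S (T (S w)) = S w" for w
  proof -
    have u0: "mn w \<in> V" using mn[of w] unfolding Mset_def by auto
    have TS: "T (S w) = T (mn w)" using s[of "T (mn w)"] u0 unfolding S_def by auto
    let ?y = "T (mn w)"
    have "Mset V T ?y = {v\<in>V. T v = ?y}"
      unfolding Mset_def using u0 by (auto dest: bspec[of _ _ "mn w"])
    then have "T (mn ?y) = ?y" using mn[of ?y] by auto
    then show ?thesis unfolding TS by (simp add: S_def)
  qed
  have "pseudo_inverse V W T S"
    unfolding pseudo_inverse_def Let_def Mset_eq(1)[OF assms]
    using Mset_eq(2)[OF assms] key mp2 by blast
  then show ?thesis by blast
qed



lemma proj:
  fixes C :: "'d::real_inner set"
  assumes "compact C" "C \<noteq> {}" "convex C"
  shows "metric_projection C w \<in> C \<and> (\<forall>y\<in>C. norm (w - metric_projection C w) \<le> norm (w - y))"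
    and "\<And>p. p \<in> C \<Longrightarrow> \<forall>y\<in>C. norm (w - p) \<le> norm (w - y) \<Longrightarrow> p = metric_projection C w"
proof -
  have uq: "p = q" if "p \<in> C" "\<forall>y\<in>C. norm (w - p) \<le> norm (w - y)"
    "q \<in> C" "\<forall>y\<in>C. norm (w - q) \<le> norm (w - y)" for p q
    by (rule any_closest_point_unique[OF assms(3) compact_imp_closed[OF assms(1)], of p q w])
       (use that in \<open>auto simp: dist_norm\<close>)
  have cc: "continuous_on C (\<lambda>p. norm (w - p))" by (intro continuous_intros)
  obtain p where p: "p \<in> C" "\<forall>y\<in>C. norm (w - p) \<le> norm (w - y)"
    using continuous_attains_inf[OF assms(1,2) cc] by blast
  have ex: "\<exists>!p. p \<in> C \<and> (\<forall>y\<in>C. norm (w - p) \<le> norm (w - y))"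
    using p uq by blast
  show A: "metric_projection C w \<in> C \<and> (\<forall>y\<in>C. norm (w - metric_projection C w) \<le> norm (w - y))"
    unfolding metric_projection_def by (rule theI'[OF ex])
  show "\<And>p. p \<in> C \<Longrightarrow> \<forall>y\<in>C. norm (w - p) \<le> norm (w - y) \<Longrightarrow> p = metric_projection C w"
    using A uq by blast
qed

lemma proj_lip:
  fixes C :: "'d::real_inner set"
  assumes "compact C" "C \<noteq> {}" "convex C"
  shows "dist (metric_projection C x) (metric_projection C y) \<le> dist x y"
proof -
  let ?P = "metric_projection C"
  have "inner (x - ?P x) (?P y - ?P x) \<le> 0"
    by (rule any_closest_point_dot[OF assms(3) compact_imp_closed[OF assms(1)]])
       (use proj(1)[OF assms, of x] proj(1)[OF assms, of y] in \<open>auto simp: dist_norm\<close>)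
  moreover have "inner (y - ?P y) (?P x - ?P y) \<le> 0"
    by (rule any_closest_point_dot[OF assms(3) compact_imp_closed[OF assms(1)]])
       (use proj(1)[OF assms, of x] proj(1)[OF assms, of y] in \<open>auto simp: dist_norm\<close>)
  ultimately show ?thesis unfolding dist_norm and norm_le
    using inner_ge_zero[of "(x - ?P x) - (y - ?P y)"]
    by (simp add: inner_add inner_diff inner_commute)
qed

lemma proj_cont:
  fixes C :: "'d::real_inner set"
  assumes "compact C" "C \<noteq> {}" "convex C"
  shows "continuous_on UNIV (metric_projection C)"
  unfolding continuous_on_iff
  using le_less_trans[OF proj_lip[OF assms]] by blast

lemma part2:
  fixes V2 :: "'c::real_normed_vector set"
    and T2 :: "'c \<Rightarrow> 'd::{real_inner,complete_space}"
  assumes "compact V2" "V2 \<noteq> {}" "continuous_on V2 T2" "inj_on T2 V2" "convex (T2 ` V2)"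
  shows "let S = the_inv_into V2 T2 \<circ> metric_projection (T2 ` V2)
                 in continuous_on UNIV S \<and> pseudo_inverse V2 UNIV T2 S \<and>
                    (\<forall>S'. pseudo_inverse V2 UNIV T2 S' \<longrightarrow> S' = S)"
proof -
  let ?C = "T2 ` V2"
  let ?P = "metric_projection ?C"
  let ?S = "the_inv_into V2 T2 \<circ> ?P"
  have C: "compact ?C" "?C \<noteq> {}" "convex ?C"
    using assms compact_continuous_image by auto
  have cS: "continuous_on UNIV ?S"
    apply (rule continuous_on_compose)
     apply (rule proj_cont[OF C])
    apply (rule continuous_on_subset[OF continuous_on_inv_into[OF assms(3,1,4)]])
    using proj(1)[OF C] by auto
  have PinC: "?P w \<in> ?C" for w using proj(1)[OF C] by blast
  have Sw: "?S w \<in> V2 \<and> T2 (?S w) = ?P w" for w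
    using PinC[of w] the_inv_into_into[OF assms(4)] f_the_inv_into_f[OF assms(4)]
    by (auto simp del: the_inv_into_f_f)
  have MS: "Mset V2 T2 w = {?S w}" for w
  proof
    show "Mset V2 T2 w \<subseteq> {?S w}"
    proof
      fix v assume v: "v \<in> Mset V2 T2 w"
      then have "v \<in> V2" "\<forall>u\<in>V2. norm (T2 v - w) \<le> norm (T2 u - w)" unfolding Mset_def by auto
      then have "\<forall>y\<in>?C. norm (w - T2 v) \<le> norm (w - y)" by (auto simp: norm_minus_commute)
      then have "T2 v = ?P w" using proj(2)[OF C] \<open>v \<in> V2\<close> by blast
      have "v = the_inv_into V2 T2 (T2 v)"
        using the_inv_into_f_f[OF assms(4) \<open>v \<in> V2\<close>] by (rule sym)
      also have "\<dots> = ?S w" unfolding \<open>T2 v = ?P w\<close> comp_def ..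
      finally show "v \<in> {?S w}" by simp
    qed
    show "{?S w} \<subseteq> Mset V2 T2 w"
      using Sw[of w] proj(1)[OF C, of w] unfolding Mset_def by (auto simp: norm_minus_commute)
  qed
  have PP: "?P (?P w) = ?P w" for w
    using proj(2)[OF C, of "?P w" "?P w"] PinC[of w] by simp
  have pi: "pseudo_inverse V2 UNIV T2 S \<longleftrightarrow> (\<forall>w. S w = ?S w \<and> S (T2 (S w)) = S w)" for S
    unfolding pseudo_inverse_def Let_def Mset_eq(1)[OF assms(1-3)] MS
    using Mset_eq(2)[OF assms(1-3)] by auto
  have mp: "?S (T2 (?S w)) = ?S w" for w using Sw PP by simp
  show ?thesis unfolding Let_def using cS pi mp by auto
qed

theorem mainTheorem7:
  fixes V :: "'a::real_normed_vector set" and W :: "'b::real_normed_vector set"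
    and T :: "'a \<Rightarrow> 'b"
    and V2 :: "'c::real_normed_vector set"
    and T2 :: "'c \<Rightarrow> 'd::{real_inner,complete_space}"
  shows "((compact V \<and> V \<noteq> {} \<and> continuous_on V T \<and> T ` V \<subseteq> W)
            \<longrightarrow> (\<exists>S. pseudo_inverse V W T S))
       \<and> ((compact V2 \<and> V2 \<noteq> {} \<and> continuous_on V2 T2 \<and> inj_on T2 V2 \<and> convex (T2 ` V2))
            \<longrightarrow> (let S = the_inv_into V2 T2 \<circ> metric_projection (T2 ` V2)
                 in continuous_on UNIV S \<and> pseudo_inverse V2 UNIV T2 S \<and>
                    (\<forall>S'. pseudo_inverse V2 UNIV T2 S' \<longrightarrow> S' = S)))"
proof (intro conjI impI)
  assume "compact V \<and> V \<noteq> {} \<and> continuous_on V T \<and> T ` V \<subseteq> W"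
  then show "\<exists>S. pseudo_inverse V W T S" using part1 by blast
next
  assume "compact V2 \<and> V2 \<noteq> {} \<and> continuous_on V2 T2 \<and> inj_on T2 V2 \<and> convex (T2 ` V2)"
  then show "let S = the_inv_into V2 T2 \<circ> metric_projection (T2 ` V2)
                 in continuous_on UNIV S \<and> pseudo_inverse V2 UNIV T2 S \<and>
                    (\<forall>S'. pseudo_inverse V2 UNIV T2 S' \<longrightarrow> S' = S)"
    using part2[of V2 T2] by blast
qed

end
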